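(* Let $H=(V,E)$ be a finite simple graph, let $M$ be a maximum $2$-matching of $H$, and let $(v_0,\dots,v_{2i+2};x_0,x_2,\dots,x_{2i})$ be a B-alternating path saving an object $O_0$ of $M$. Define $$M'=\bigl(M\setminus\{v_{2j+1}v_{2j+2}:0\le j\le i\}\bigr)\cup\{x_{2j}v_{2j+1}:0\le j\le i\}.$$ Then $M'$ is a maximum $2$-matching of $H$. Moreover, the number of components of $(V,M')$ that are $0$-paths or $1$-paths is exactly one less than the corresponding number for $(V,M)$.
   Context: A $2$-matching of $H$ is a set $M\subseteq E$ in which every vertex is incident to at most two edges of $M$. It is maximum if $|M|$ is as large as possible. The components of $(V,M)$ are paths and cycles. A single vertex counts as a $0$-path, and a $k$-path has $k$ edges. An object of $M$ is the vertex set of a component of $(V,M)$ that is a $0$-path or a $1$-path. A B-alternating path saving the object $O_0$ consists of pairwise distinct vertices $v_0,v_1,\dots,v_{2i+2}$ (with $i\ge 0$), together with vertices $x_0,x_2,\dots,x_{2i}$, satisfying: (1) $v_0\in O_0$ and $x_0=v_0$. (2) For each $j=1,\dots,i$ there is a component $P_j$ of $(V,M)$ that is a path with $2$, $3$ or $4$ edges, and $P_1,\dots,P_i$ are pairwise distinct. The vertex $v_{2j-1}$ is an internal vertex of $P_j$, and it is the middle vertex of $P_j$ if $P_j$ has $4$ edges. The vertex $v_{2j}$ is a neighbour of $v_{2j-1}$ on $P_j$. Let $O_j$ be the vertex set of the component of $P_j$ minus the edge $v_{2j-1}v_{2j}$ that contains $v_{2j}$. Then $x_{2j}\in O_j$.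 (3) $x_{2j}v_{2j+1}\in E\setminus M$ for every $j=0,\dots,i$. (4) The vertex $v_{2i+1}$ lies on a component $Q$ of $(V,M)$ different from $P_1,\dots,P_i$. The component $Q$ is either a cycle, or a path with at least $5$ edges, or a path with exactly $4$ edges of which $v_{2i+1}$ is not the middle vertex. (5) $v_{2i+1}v_{2i+2}\in M$, and if $Q$ is a path then the component of $Q$ minus the edge $v_{2i+1}v_{2i+2}$ containing $v_{2i+2}$ has at least $3$ vertices. *)

theory Defs
  imports Main
begin

definition simple_graph :: "'a set \<Rightarrow> 'a set set \<Rightarrow> bool" where
  "simple_graph V E \<longleftrightarrow> finite V \<and> (\<forall>e\<in>E. \<exists>u w. u \<in> V \<and> w \<in> V \<and> u \<noteq> w \<and> e = {u, w})"

definition two_matching :: "'a set \<Rightarrow> 'a set set \<Rightarrow> 'a set set \<Rightarrow> bool" where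
  "two_matching V E M \<longleftrightarrow> M \<subseteq> E \<and> (\<forall>v\<in>V. card {e\<in>M. v \<in> e} \<le> 2)"

definition max_two_matching :: "'a set \<Rightarrow> 'a set set \<Rightarrow> 'a set set \<Rightarrow> bool" where
  "max_two_matching V E M \<longleftrightarrow> two_matching V E M \<and>
     (\<forall>M'. two_matching V E M' \<longrightarrow> card M' \<le> card M)"

definition comp :: "'a set set \<Rightarrow> 'a \<Rightarrow> 'a set" where
  "comp M v = {u. (\<lambda>a b. {a, b} \<in> M)\<^sup>*\<^sup>* v u}"

definition comps :: "'a set \<Rightarrow> 'a set set \<Rightarrow> 'a set set" where
  "comps V M = comp M ` V"

definition comp_edges :: "'a set set \<Rightarrow> 'a set \<Rightarrow> 'a set set" where
  "comp_edges M C = {e \<in> M. e \<subseteq> C}"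

definition path_seq :: "'a set set \<Rightarrow> 'a set \<Rightarrow> 'a list \<Rightarrow> bool" where
  "path_seq M C ps \<longleftrightarrow> ps \<noteq> [] \<and> distinct ps \<and> set ps = C \<and>
     comp_edges M C = {{ps ! j, ps ! Suc j} | j. Suc j < length ps}"

definition is_k_path :: "'a set set \<Rightarrow> 'a set \<Rightarrow> nat \<Rightarrow> bool" where
  "is_k_path M C k \<longleftrightarrow> (\<exists>ps. path_seq M C ps \<and> length ps = k + 1)"

definition is_path :: "'a set set \<Rightarrow> 'a set \<Rightarrow> bool" where
  "is_path M C \<longleftrightarrow> (\<exists>k. is_k_path M C k)"

definition is_cycle :: "'a set set \<Rightarrow> 'a set \<Rightarrow> bool" where
  "is_cycle M C \<longleftrightarrow> (\<exists>ps. distinct ps \<and> length ps \<ge> 3 \<and> set ps = C \<and>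
     comp_edges M C = {{ps ! j, ps ! ((j + 1) mod length ps)} | j. j < length ps})"

definition internal_vertex :: "'a set set \<Rightarrow> 'a set \<Rightarrow> 'a \<Rightarrow> bool" where
  "internal_vertex M C w \<longleftrightarrow>
     (\<exists>ps l. path_seq M C ps \<and> 0 < l \<and> Suc l < length ps \<and> w = ps ! l)"

definition middle_vertex :: "'a set set \<Rightarrow> 'a set \<Rightarrow> 'a \<Rightarrow> bool" where
  "middle_vertex M C w \<longleftrightarrow> (\<exists>ps. path_seq M C ps \<and> length ps = 5 \<and> w = ps ! 2)"

definition objects :: "'a set \<Rightarrow> 'a set set \<Rightarrow> 'a set set" where
  "objects V M = {C \<in> comps V M. is_k_path M C 0 \<or> is_k_path M C 1}"

(* B-alternating path (v_0..v_{2i+2}; x_0,x_2,..,x_{2i}) saving the object O0.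
   P_j is the component of v_{2j-1}, Q the component of v_{2i+1}. *)
definition B_alternating_path ::
  "'a set \<Rightarrow> 'a set set \<Rightarrow> 'a set set \<Rightarrow> 'a set \<Rightarrow> nat \<Rightarrow> (nat \<Rightarrow> 'a) \<Rightarrow> (nat \<Rightarrow> 'a) \<Rightarrow> bool" where
  "B_alternating_path V E M O0 i v x \<longleftrightarrow>
     (\<forall>k\<le>2*i+2. v k \<in> V) \<and> inj_on v {0..2*i+2} \<and>
     (\<forall>j\<le>i. x (2*j) \<in> V) \<and>
     \<comment> \<open>(1)\<close>
     O0 \<in> objects V M \<and> v 0 \<in> O0 \<and> x 0 = v 0 \<and>
     \<comment> \<open>(2)\<close>
     inj_on (\<lambda>j. comp M (v (2*j - 1))) {1..i} \<and>
     (\<forall>j\<in>{1..i}.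
        (is_k_path M (comp M (v (2*j - 1))) 2 \<or> is_k_path M (comp M (v (2*j - 1))) 3 \<or>
         is_k_path M (comp M (v (2*j - 1))) 4) \<and>
        internal_vertex M (comp M (v (2*j - 1))) (v (2*j - 1)) \<and>
        (is_k_path M (comp M (v (2*j - 1))) 4 \<longrightarrow>
           middle_vertex M (comp M (v (2*j - 1))) (v (2*j - 1))) \<and>
        {v (2*j - 1), v (2*j)} \<in> M \<and>
        x (2*j) \<in> comp (M - {{v (2*j - 1), v (2*j)}}) (v (2*j))) \<and>
     \<comment> \<open>(3)\<close>
     (\<forall>j\<le>i. {x (2*j), v (2*j + 1)} \<in> E - M) \<and>
     \<comment> \<open>(4)\<close>
     comp M (v (2*i + 1)) \<notin> (\<lambda>j. comp M (v (2*j - 1))) ` {1..i} \<and>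
     (is_cycle M (comp M (v (2*i + 1))) \<or>
      (\<exists>k\<ge>5. is_k_path M (comp M (v (2*i + 1))) k) \<or>
      (is_k_path M (comp M (v (2*i + 1))) 4 \<and>
         \<not> middle_vertex M (comp M (v (2*i + 1))) (v (2*i + 1)))) \<and>
     \<comment> \<open>(5)\<close>
     {v (2*i + 1), v (2*i + 2)} \<in> M \<and>
     (is_path M (comp M (v (2*i + 1))) \<longrightarrow>
        card (comp (M - {{v (2*i + 1), v (2*i + 2)}}) (v (2*i + 2))) \<ge> 3)"

end

theory Submission
  imports Defs
begin



lemma comp_refl: "v \<in> comp N v"
  by (simp add: comp_def)

lemma comp_step: "a \<in> comp N z \<Longrightarrow> {a,b} \<in> N \<Longrightarrow> b \<in> comp N z"
  unfolding comp_def by (auto intro: rtranclp.rtrancl_into_rtrancl)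

lemma comp_sym: "u \<in> comp N v \<Longrightarrow> v \<in> comp N u"
proof -
  have s: "symp (\<lambda>a b. {a, b} \<in> N)" by (auto simp: symp_def insert_commute)
  assume "u \<in> comp N v" thus ?thesis unfolding comp_def
    using sympD[OF symp_rtranclp[OF s]] by auto
qed

lemma comp_trans: "u \<in> comp N v \<Longrightarrow> w \<in> comp N u \<Longrightarrow> w \<in> comp N v"
  unfolding comp_def by auto

lemma comp_eq: "u \<in> comp N v \<Longrightarrow> comp N u = comp N v"
  by (meson comp_sym comp_trans subsetI subset_antisym)

lemma comp_inv:
  assumes "\<And>a b. a \<in> S \<Longrightarrow> {a,b} \<in> N \<Longrightarrow> b \<in> S \<and> {a,b} \<in> N2" "z \<in> S"
  shows "comp N z \<subseteq> S \<inter> comp N2 z"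
proof
  fix u assume "u \<in> comp N z"
  hence "(\<lambda>a b. {a, b} \<in> N)\<^sup>*\<^sup>* z u" by (simp add: comp_def)
  hence "u \<in> S \<and> u \<in> comp N2 z"
  proof (induction rule: rtranclp_induct)
    case base thus ?case using assms comp_refl by metis
  next
    case (step y w) thus ?case using assms comp_step by metis
  qed
  thus "u \<in> S \<inter> comp N2 z" by simp
qed

lemma comp_closed_sub:
  assumes "\<And>a b. a \<in> S \<Longrightarrow> {a,b} \<in> N \<Longrightarrow> b \<in> S" "z \<in> S"
  shows "comp N z \<subseteq> S"
  using comp_inv[of S N N z] assms by blast

lemma comp_mono_sub:
  assumes "\<And>a b. a \<in> S \<Longrightarrow> {a,b} \<in> N \<Longrightarrow> b \<in> S \<and> {a,b} \<in> N2" "z \<in> S"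
  shows "comp N z \<subseteq> comp N2 z"
  using comp_inv[OF assms] by blast

lemma comp_in_V:
  assumes "\<forall>e\<in>N. e \<subseteq> V" "z \<in> V" shows "comp N z \<subseteq> V"
  using assms by (intro comp_closed_sub) auto

lemma path_seq_card: "path_seq N C ps \<Longrightarrow> card C = length ps"
  unfolding path_seq_def using distinct_card by metis

lemma k_path_card: "is_k_path N C k \<Longrightarrow> card C = Suc k"
  unfolding is_k_path_def using path_seq_card by fastforce

lemma cycle_card: "is_cycle N C \<Longrightarrow> card C \<ge> 3"
  unfolding is_cycle_def using distinct_card by metis

definition edges2 :: "'a set set \<Rightarrow> bool" where
  "edges2 N \<longleftrightarrow> (\<forall>e\<in>N. \<exists>a b. a \<noteq> b \<and> e = {a,b})"

lemma edges2_ne: "edges2 N \<Longrightarrow> {a,b} \<in> N \<Longrightarrow> a \<noteq> b"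
  unfolding edges2_def by (metis doubleton_eq_iff)

lemma small_obj:
  assumes "edges2 N" "C = comp N w" "finite C"
  shows "(is_k_path N C 0 \<or> is_k_path N C 1) \<longleftrightarrow> card C \<le> 2"
proof
  assume "is_k_path N C 0 \<or> is_k_path N C 1" thus "card C \<le> 2" using k_path_card by fastforce
next
  assume c: "card C \<le> 2"
  have wC: "w \<in> C" using assms comp_refl by metis
  show "is_k_path N C 0 \<or> is_k_path N C 1"
  proof (cases "C = {w}")
    case True
    have "comp_edges N C = {}" using True assms(1) unfolding comp_edges_def edges2_def by fastforce
    hence "path_seq N C [w]" using True by (simp add: path_seq_def)
    thus ?thesis unfolding is_k_path_def by force
  next
    case False
    then obtain u where u: "u \<in> C" "u \<noteq> w" using wC by blast
    have Cw: "C = {w,u}"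
    proof -
      have "card {w,u} = 2" using u by simp
      moreover have "{w,u} \<subseteq> C" using u wC by auto
      ultimately show ?thesis using c assms(3) by (metis card_seteq)
    qed
    have "(\<lambda>a b. {a, b} \<in> N)\<^sup>*\<^sup>* w u" using u assms(2) by (simp add: comp_def)
    then obtain a where a: "{w,a} \<in> N" "(\<lambda>a b. {a, b} \<in> N)\<^sup>*\<^sup>* a u"
      using u(2) by (cases rule: converse_rtranclpE) auto
    have "a \<in> C" using a(1) assms(2) comp_refl comp_step by metis
    moreover have "a \<noteq> w" using a(1) assms(1) edges2_ne by metis
    ultimately have "a = u" using Cw by auto
    with a have wu: "{w,u} \<in> N" by simp
    have "comp_edges N C = {{w,u}}"
    proof -
      have "\<And>e. e \<in> N \<Longrightarrow> e \<subseteq> {w,u} \<Longrightarrow> e = {w,u}"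
        using assms(1) u(2) unfolding edges2_def by blast
      thus ?thesis using wu Cw unfolding comp_edges_def by auto
    qed
    moreover have "{{[w,u] ! j, [w,u] ! Suc j} | j. Suc j < length [w,u]} = {{w,u}}" by auto
    ultimately have "path_seq N C [w,u]" using Cw u by (auto simp: path_seq_def)
    thus ?thesis unfolding is_k_path_def by force
  qed
qed


lemma nbr_idx:
  assumes "path_seq N C ps" "C = comp N z" "p < length ps" "{ps!p, b} \<in> N"
  shows "\<exists>q<length ps. b = ps!q \<and> (q = Suc p \<or> p = Suc q)"
proof -
  have pC: "ps!p \<in> C" using assms(1,3) unfolding path_seq_def by (metis nth_mem)
  hence "b \<in> C" using assms comp_step by metis
  hence "{ps!p, b} \<in> comp_edges N C" using pC assms(4) by (simp add: comp_edges_def)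
  then obtain m where m: "{ps!p, b} = {ps!m, ps!Suc m}" "Suc m < length ps"
    using assms(1) unfolding path_seq_def by auto
  have d: "distinct ps" using assms(1) path_seq_def by metis
  show ?thesis
  proof (cases "ps!p = ps!m")
    case True
    hence "p = m" using d assms(3) m(2) nth_eq_iff_index_eq by fastforce
    moreover have "b = ps!Suc m" using m True d by (metis doubleton_eq_iff)
    ultimately show ?thesis using m(2) by blast
  next
    case False
    hence "ps!p = ps!Suc m" "b = ps!m" using m by (auto simp: doubleton_eq_iff)
    hence "p = Suc m" using d assms(3) m(2) nth_eq_iff_index_eq by fastforce
    have "m < length ps" using m(2) by simp
    thus ?thesis using \<open>p = Suc m\<close> \<open>b = ps!m\<close> by blast
  qed
qed

lemma ps_edges:
  assumes "path_seq N C ps" "Suc j < length ps"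
  shows "{ps!j, ps!Suc j} \<in> N"
  using assms unfolding path_seq_def comp_edges_def by blast

lemma internal_nbrs:
  assumes "internal_vertex N C w"
  shows "\<exists>a b. a \<noteq> b \<and> {w,a} \<in> N \<and> {w,b} \<in> N"
proof -
  obtain ps l where pl: "path_seq N C ps" "0 < l" "Suc l < length ps" "w = ps!l"
    using assms unfolding internal_vertex_def by blast
  have d: "distinct ps" using pl(1) path_seq_def by metis
  obtain q where q: "l = Suc q" using pl(2) gr0_implies_Suc by blast
  have "{ps!q, ps!l} \<in> N" using ps_edges[OF pl(1), of q] q pl(3) by simp
  moreover have "{ps!l, ps!Suc l} \<in> N" using ps_edges[OF pl(1) pl(3)] .
  moreover have "ps!q \<noteq> ps!Suc l" using d q pl(3) nth_eq_iff_index_eq by fastforce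
  ultimately show ?thesis using pl(4) by (metis insert_commute)
qed

lemma cycle_nbrs:
  assumes "is_cycle N C" "w \<in> C"
  shows "\<exists>a b. a \<noteq> b \<and> {w,a} \<in> N \<and> {w,b} \<in> N"
proof -
  obtain ps where ps: "distinct ps" "length ps \<ge> 3" "set ps = C"
    "comp_edges N C = {{ps ! j, ps ! ((j + 1) mod length ps)} | j. j < length ps}"
    using assms(1) unfolding is_cycle_def by blast
  have ce: "{ps!j, ps!((j+1) mod length ps)} \<in> N" if "j < length ps" for j
  proof -
    have "{ps!j, ps!((j+1) mod length ps)} \<in> {{ps ! j, ps ! ((j + 1) mod length ps)} | j. j < length ps}"
      using that by blast
    hence "{ps!j, ps!((j+1) mod length ps)} \<in> comp_edges N C" using ps(4) by simp
    thus ?thesis unfolding comp_edges_def by simp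
  qed
  define n where "n = length ps"
  obtain l where l: "l < n" "w = ps!l" using assms(2) ps(3) n_def by (auto simp: in_set_conv_nth)
  define q where "q = (if l = 0 then n - 1 else l - 1)"
  have n3: "n \<ge> 3" using ps(2) n_def by simp
  have qn: "q < n"
  proof (cases "l = 0")
    case True thus ?thesis using n3 unfolding q_def by simp
  next
    case False thus ?thesis using l(1) unfolding q_def by simp
  qed
  have e1: "{ps!l, ps!((l+1) mod n)} \<in> N" using ce l(1) n_def by simp
  have "(q + 1) mod n = l"
  proof (cases "l = 0")
    case True thus ?thesis using n3 unfolding q_def by simp
  next
    case False thus ?thesis using l(1) unfolding q_def by simp
  qed
  hence "{ps!q, ps!((q+1) mod length ps)} = {ps!q, ps!l}" using n_def by simp
  hence e2: "{ps!q, ps!l} \<in> N" using ce[of q] qn n_def by simp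
  have "(l+1) mod n \<noteq> q"
  proof (cases "l = 0")
    case True thus ?thesis using n3 unfolding q_def by simp
  next
    case False
    show ?thesis
    proof (cases "l + 1 = n")
      case True thus ?thesis using False n3 unfolding q_def by simp
    next
      case f2: False
      hence "(l+1) mod n = l + 1" using l(1) by simp
      thus ?thesis using False unfolding q_def by simp
    qed
  qed
  moreover have "(l+1) mod n < n" using n3 by simp
  ultimately have "ps!((l+1) mod n) \<noteq> ps!q" using ps(1) qn n_def by (simp add: nth_eq_iff_index_eq)
  thus ?thesis using e1 e2 l(2) by (metis insert_commute)
qed





lemma piece_idx:
  assumes "is_k_path N C k" "k = 2 \<or> k = 3 \<or> k = 4" "internal_vertex N C w"
    "k = 4 \<longrightarrow> middle_vertex N C w"
  shows "\<exists>ps l. path_seq N C ps \<and> 0 < l \<and> Suc l < length ps \<and> w = ps!l \<and> length ps \<le> 5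
     \<and> (length ps = 5 \<longrightarrow> l = 2)"
proof (cases "k = 4")
  case True
  then obtain ps where ps: "path_seq N C ps" "length ps = 5" "w = ps!2"
    using assms(4) unfolding middle_vertex_def by blast
  thus ?thesis by (intro exI[of _ ps] exI[of _ 2]) auto
next
  case False
  obtain ps l where pl: "path_seq N C ps" "0 < l" "Suc l < length ps" "w = ps!l"
    using assms(3) unfolding internal_vertex_def by blast
  have "length ps = Suc k" using path_seq_card[OF pl(1)] k_path_card[OF assms(1)] by simp
  hence "length ps \<le> 4" using False assms(2) by auto
  thus ?thesis using pl by (intro exI[of _ ps] exI[of _ l]) auto
qed

lemma piece:
  assumes "is_k_path N C k" "k = 2 \<or> k = 3 \<or> k = 4" "C = comp N z" "internal_vertex N C w"
    "k = 4 \<longrightarrow> middle_vertex N C w" "{w,y} \<in> N"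
  shows "\<exists>S. y \<in> S \<and> w \<notin> S \<and> finite S \<and> card S \<le> 2 \<and> S \<subseteq> C \<and>
     (\<forall>a b. a \<in> S \<longrightarrow> {a,b} \<in> N \<longrightarrow> {a,b} \<noteq> {w,y} \<longrightarrow> b \<in> S)"
proof -
  obtain ps l where pl: "path_seq N C ps" "0 < l" "Suc l < length ps" "w = ps!l" "length ps \<le> 5"
     "length ps = 5 \<longrightarrow> l = 2"
    using piece_idx[OF assms(1,2,4,5)] by blast
  have d: "distinct ps" and sC: "set ps = C" using pl(1) path_seq_def by metis+
  obtain q where q: "q < length ps" "y = ps!q" "q = Suc l \<or> l = Suc q"
    using nbr_idx[OF pl(1) assms(3), of l y] pl(3,4) assms(6) by auto
  have inj: "\<And>i j. i < length ps \<Longrightarrow> j < length ps \<Longrightarrow> ps!i = ps!j \<longleftrightarrow> i = j"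
    using d nth_eq_iff_index_eq by blast
  have wy: "\<And>a b. {a,b} = {w,y} \<longleftrightarrow> (a = w \<and> b = y) \<or> (a = y \<and> b = w)"
    by (auto simp: doubleton_eq_iff)
  show ?thesis
  proof (cases "l = Suc q")
    case True
    define S where "S = (\<lambda>p. ps!p) ` {..<l}"
    have "y \<in> S" using True q(2) S_def by auto
    moreover have "w \<notin> S"
    proof
      assume "w \<in> S" then obtain p where "p < l" "ps!l = ps!p" using S_def pl(4) by auto
      thus False using inj pl(3) by force
    qed
    moreover have "finite S" using S_def by simp
    moreover have "card S \<le> 2"
    proof -
      have "card S \<le> card {..<l}" using S_def card_image_le by blast
      moreover have "l \<le> 2" using pl(3,5,6) by (cases "length ps = 5") auto
      ultimately show ?thesis by simp
    qed
    moreover have "S \<subseteq> C" using S_def sC pl(3) by auto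
    moreover have "\<forall>a b. a \<in> S \<longrightarrow> {a,b} \<in> N \<longrightarrow> {a,b} \<noteq> {w,y} \<longrightarrow> b \<in> S"
    proof (intro allI impI)
      fix a b assume a: "a \<in> S" "{a,b} \<in> N" "{a,b} \<noteq> {w,y}"
      obtain p where p: "p < l" "a = ps!p" using a(1) S_def by auto
      obtain r where r: "r < length ps" "b = ps!r" "r = Suc p \<or> p = Suc r"
        using nbr_idx[OF pl(1) assms(3), of p b] p a(2) pl(3) by auto
      show "b \<in> S"
      proof (cases "r < l")
        case True thus ?thesis using S_def r(2) by auto
      next
        case False
        hence "r = l" "p = q" using r(3) p(1) \<open>l = Suc q\<close> by auto
        hence "a = y" "b = w" using p r q pl(4) by auto
        thus ?thesis using a(3) wy by blast
      qed
    qed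
    ultimately show ?thesis by blast
  next
    case False
    hence ql: "q = Suc l" using q(3) by simp
    define S where "S = (\<lambda>p. ps!p) ` {Suc l..<length ps}"
    have "y \<in> S" using ql q(1,2) S_def by auto
    moreover have "w \<notin> S"
    proof
      assume "w \<in> S" then obtain p where "Suc l \<le> p" "p < length ps" "ps!l = ps!p" using S_def pl(4) by auto
      thus False using inj pl(3) by force
    qed
    moreover have "finite S" using S_def by simp
    moreover have "card S \<le> 2"
    proof -
      have "card S \<le> card {Suc l..<length ps}" using S_def card_image_le by blast
      moreover have "length ps - Suc l \<le> 2" using pl(2,3,5,6) by (cases "length ps = 5") auto
      ultimately show ?thesis by simp
    qed
    moreover have "S \<subseteq> C" using S_def sC by auto
    moreover have "\<forall>a b. a \<in> S \<longrightarrow> {a,b} \<in> N \<longrightarrow> {a,b} \<noteq> {w,y} \<longrightarrow> b \<in> S"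
    proof (intro allI impI)
      fix a b assume a: "a \<in> S" "{a,b} \<in> N" "{a,b} \<noteq> {w,y}"
      obtain p where p: "Suc l \<le> p" "p < length ps" "a = ps!p" using a(1) S_def by auto
      obtain r where r: "r < length ps" "b = ps!r" "r = Suc p \<or> p = Suc r"
        using nbr_idx[OF pl(1) assms(3), of p b] p a(2) by auto
      show "b \<in> S"
      proof (cases "Suc l \<le> r")
        case True thus ?thesis using S_def r(1,2) by auto
      next
        case False
        hence "r = l" "p = q" using r(3) p(1) ql by auto
        hence "a = y" "b = w" using p r q pl(4) by auto
        thus ?thesis using a(3) wy by blast
      qed
    qed
    ultimately show ?thesis by blast
  qed
qed


lemma deg_small:
  assumes "edges2 F" "x \<in> S" "finite S" "card S \<le> 2" "\<And>b. {x,b} \<in> F \<Longrightarrow> b \<in> S"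
  shows "card {e\<in>F. x \<in> e} \<le> 1"
proof -
  have "{e\<in>F. x \<in> e} \<subseteq> (\<lambda>b. {x,b}) ` (S - {x})"
  proof
    fix e assume e: "e \<in> {e\<in>F. x \<in> e}"
    then obtain a b where ab: "a \<noteq> b" "e = {a,b}" using assms(1) edges2_def by (metis (no_types, lifting) mem_Collect_eq)
    then obtain c where c: "e = {x,c}" "c \<noteq> x" using e by auto
    hence "c \<in> S" using assms(5) e by auto
    thus "e \<in> (\<lambda>b. {x,b}) ` (S - {x})" using c by auto
  qed
  moreover have "card (S - {x}) \<le> 1" using assms(2,3,4) by simp
  ultimately show ?thesis
    by (meson assms(3) card_image_le finite_Diff le_trans card_mono finite_imageI)
qed




locale S6 =
  fixes V :: "'a set" and E M :: "'a set set" and O0 :: "'a set" and i :: nat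
    and v x :: "nat \<Rightarrow> 'a" and M' :: "'a set set"
  assumes G: "simple_graph V E" and MM: "max_two_matching V E M"
    and BP: "B_alternating_path V E M O0 i v x"
    and M'_def: "M' = (M - {{v (2*j + 1), v (2*j + 2)} | j. j \<le> i})
                 \<union> {{x (2*j), v (2*j + 1)} | j. j \<le> i}"
begin

definition "ee j = {v (2*j+1), v (2*j+2)}"
definition "aa j = {x (2*j), v (2*j+1)}"
definition "RR = {ee j | j. j \<le> i}"
definition "AA = {aa j | j. j \<le> i}"
definition "P k = comp M (v (2*k - 1))"

lemmas BPu = BP[unfolded B_alternating_path_def]
lemmas BP1 = BPu[THEN conjunct1]
lemmas BP2 = BPu[THEN conjunct2, THEN conjunct1]
lemmas BP3 = BPu[THEN conjunct2, THEN conjunct2, THEN conjunct1]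
lemmas BP4 = BPu[THEN conjunct2, THEN conjunct2, THEN conjunct2, THEN conjunct1]
lemmas BP5 = BPu[THEN conjunct2, THEN conjunct2, THEN conjunct2, THEN conjunct2, THEN conjunct1]
lemmas BP6 = BPu[THEN conjunct2, THEN conjunct2, THEN conjunct2, THEN conjunct2, THEN conjunct2, THEN conjunct1]
lemmas BP7 = BPu[THEN conjunct2, THEN conjunct2, THEN conjunct2, THEN conjunct2, THEN conjunct2, THEN conjunct2, THEN conjunct1]
lemmas BP8 = BPu[THEN conjunct2, THEN conjunct2, THEN conjunct2, THEN conjunct2, THEN conjunct2, THEN conjunct2, THEN conjunct2, THEN conjunct1]
lemmas BP9 = BPu[THEN conjunct2, THEN conjunct2, THEN conjunct2, THEN conjunct2, THEN conjunct2, THEN conjunct2, THEN conjunct2, THEN conjunct2, THEN conjunct1]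
lemmas BP10 = BPu[THEN conjunct2, THEN conjunct2, THEN conjunct2, THEN conjunct2, THEN conjunct2, THEN conjunct2, THEN conjunct2, THEN conjunct2, THEN conjunct2, THEN conjunct1]
lemmas BP11 = BPu[THEN conjunct2, THEN conjunct2, THEN conjunct2, THEN conjunct2, THEN conjunct2, THEN conjunct2, THEN conjunct2, THEN conjunct2, THEN conjunct2, THEN conjunct2, THEN conjunct1]
lemmas BP12 = BPu[THEN conjunct2, THEN conjunct2, THEN conjunct2, THEN conjunct2, THEN conjunct2, THEN conjunct2, THEN conjunct2, THEN conjunct2, THEN conjunct2, THEN conjunct2, THEN conjunct2, THEN conjunct1]
lemmas BP13 = BPu[THEN conjunct2, THEN conjunct2, THEN conjunct2, THEN conjunct2, THEN conjunct2, THEN conjunct2, THEN conjunct2, THEN conjunct2, THEN conjunct2, THEN conjunct2, THEN conjunct2, THEN conjunct2]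

lemma M'_eq: "M' = (M - RR) \<union> AA"
  unfolding M'_def RR_def AA_def ee_def aa_def by simp

lemma P_Suc: "P (Suc j) = comp M (v (2*j+1))"
  by (simp add: P_def)

lemma finV: "finite V" using G unfolding simple_graph_def by blast
lemma Eedge: "e \<in> E \<Longrightarrow> \<exists>u w. u \<in> V \<and> w \<in> V \<and> u \<noteq> w \<and> e = {u,w}"
  using G unfolding simple_graph_def by blast
lemma E_sub: "e \<in> E \<Longrightarrow> e \<subseteq> V" using Eedge by blast
lemma E2: "edges2 E" unfolding edges2_def using Eedge by blast
lemma finE: "finite E"
proof -
  have "E \<subseteq> Pow V" using E_sub by blast
  thus ?thesis using finV finite_subset by blast
qed
lemma ME: "M \<subseteq> E" using MM max_two_matching_def two_matching_def by blast
lemma degM: "w \<in> V \<Longrightarrow> card {e\<in>M. w \<in> e} \<le> 2"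
  using MM max_two_matching_def two_matching_def by blast
lemma finM: "finite M" using ME finE finite_subset by blast
lemma M2: "edges2 M" using E2 ME unfolding edges2_def by blast

lemma vV: "k \<le> 2*i+2 \<Longrightarrow> v k \<in> V" using BP1 by blast
lemma vinj: "k \<le> 2*i+2 \<Longrightarrow> k' \<le> 2*i+2 \<Longrightarrow> v k = v k' \<Longrightarrow> k = k'"
  using BP2 unfolding inj_on_def by auto
lemma xV: "j \<le> i \<Longrightarrow> x (2*j) \<in> V" using BP3 by blast
lemma O0obj: "O0 \<in> objects V M" and v0O0: "v 0 \<in> O0" and x0: "x 0 = v 0"
  using BP4 BP5 BP6 by blast+
lemma Pinj0: "inj_on P {1..i}"
  using BP7 unfolding P_def by blast
lemma Pprops: "k \<in> {1..i} \<Longrightarrow>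
   (is_k_path M (P k) 2 \<or> is_k_path M (P k) 3 \<or> is_k_path M (P k) 4) \<and>
   internal_vertex M (P k) (v (2*k - 1)) \<and>
   (is_k_path M (P k) 4 \<longrightarrow> middle_vertex M (P k) (v (2*k - 1))) \<and>
   {v (2*k - 1), v (2*k)} \<in> M \<and>
   x (2*k) \<in> comp (M - {{v (2*k - 1), v (2*k)}}) (v (2*k))"
  using BP8 unfolding P_def by blast
lemma aEM: "j \<le> i \<Longrightarrow> aa j \<in> E - M"
  using BP9 unfolding aa_def by blast
lemma Qnot: "P (Suc i) \<notin> P ` {1..i}"
  using BP10 unfolding P_Suc by (simp add: P_def)
lemma Qshape: "is_cycle M (P (Suc i)) \<or> (\<exists>k\<ge>5. is_k_path M (P (Suc i)) k) \<or>
      (is_k_path M (P (Suc i)) 4 \<and> \<not> middle_vertex M (P (Suc i)) (v (2*i + 1)))"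
  using BP11 unfolding P_Suc by blast
lemma eiM: "ee i \<in> M"
  using BP12 unfolding ee_def by blast
lemma Q5: "is_path M (P (Suc i)) \<Longrightarrow> card (comp (M - {ee i}) (v (2*i + 2))) \<ge> 3"
  using BP13 unfolding P_Suc ee_def by blast

end


context S6 begin

lemma AA_E: "AA \<subseteq> E" using aEM unfolding AA_def by blast
lemma AA_M: "AA \<inter> M = {}" using aEM unfolding AA_def by blast
lemma M'E: "M' \<subseteq> E" using M'_eq ME AA_E by blast
lemma M'2: "edges2 M'" using E2 M'E unfolding edges2_def by blast

lemma compV: "N \<subseteq> E \<Longrightarrow> w \<in> V \<Longrightarrow> comp N w \<subseteq> V"
  using comp_in_V E_sub by (metis subsetD)
lemma compfin: "N \<subseteq> E \<Longrightarrow> w \<in> V \<Longrightarrow> finite (comp N w)"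
  using compV finV finite_subset by metis

lemma PpropsS:
  assumes "j < i"
  shows "(is_k_path M (P (Suc j)) 2 \<or> is_k_path M (P (Suc j)) 3 \<or> is_k_path M (P (Suc j)) 4) \<and>
   internal_vertex M (P (Suc j)) (v (2*j+1)) \<and>
   (is_k_path M (P (Suc j)) 4 \<longrightarrow> middle_vertex M (P (Suc j)) (v (2*j+1))) \<and>
   ee j \<in> M \<and> x (2*j+2) \<in> comp (M - {ee j}) (v (2*j+2))"
proof -
  have "Suc j \<in> {1..i}" using assms by simp
  note h = Pprops[OF this]
  have e1: "2*j+2 - 1 = 2*j+1" and e2: "2 * Suc j = 2*j+2" by simp_all
  show ?thesis using h unfolding e2 e1 ee_def by blast
qed

lemma ee_M: "j \<le> i \<Longrightarrow> ee j \<in> M"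
  using PpropsS eiM by (cases "j = i") auto

lemma vV1: "j \<le> i \<Longrightarrow> v (2*j+1) \<in> V" using vV by simp
lemma vV2: "j \<le> i \<Longrightarrow> v (2*j+2) \<in> V" using vV by simp

lemma vP1: "v (2*j+1) \<in> P (Suc j)" unfolding P_Suc by (rule comp_refl)
lemma vP2: "j \<le> i \<Longrightarrow> v (2*j+2) \<in> P (Suc j)"
  using ee_M vP1 comp_step unfolding ee_def P_Suc by metis

lemma Pinj: "j \<le> i \<Longrightarrow> k \<le> i \<Longrightarrow> P (Suc j) = P (Suc k) \<Longrightarrow> j = k"
proof -
  assume a: "j \<le> i" "k \<le> i" "P (Suc j) = P (Suc k)"
  show "j = k"
  proof (cases "j = i \<or> k = i")
    case True
    show ?thesis
    proof (rule ccontr)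
      assume ne: "j \<noteq> k"
      show False
      proof (cases "j = i")
        case True
        hence "Suc k \<in> {1..i}" using ne a by auto
        thus False using Qnot a(3) True by (metis image_eqI)
      next
        case False
        hence "k = i" "Suc j \<in> {1..i}" using \<open>j = i \<or> k = i\<close> a by auto
        thus False using Qnot a(3) by (metis image_eqI)
      qed
    qed
  next
    case False
    hence "Suc j \<in> {1..i}" "Suc k \<in> {1..i}" using a by auto
    thus ?thesis using Pinj0 a(3) inj_on_def by (metis Suc_inject)
  qed
qed

lemma inP: "j \<le> i \<Longrightarrow> k \<le> i \<Longrightarrow> u \<in> P (Suc j) \<Longrightarrow> u \<in> P (Suc k) \<Longrightarrow> j = k"
  using Pinj comp_eq unfolding P_Suc by metis

lemma Pcard: "j \<le> i \<Longrightarrow> card (P (Suc j)) \<ge> 3"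
proof (cases "j = i")
  case True
  thus ?thesis using Qshape cycle_card k_path_card by fastforce
next
  case False
  assume "j \<le> i" hence "j < i" using False by simp
  thus ?thesis using PpropsS[of j] k_path_card by fastforce
qed

lemma O0prop: "O0 = comp M (v 0)" "card O0 \<le> 2" "finite O0"
proof -
  obtain w where w: "w \<in> V" "O0 = comp M w" "is_k_path M O0 0 \<or> is_k_path M O0 1"
    using O0obj unfolding objects_def comps_def by blast
  show "card O0 \<le> 2" using w(3) k_path_card by fastforce
  show "O0 = comp M (v 0)" using w(2) v0O0 comp_eq by metis
  show "finite O0" using w compfin ME by metis
qed

lemma O0notP: "j \<le> i \<Longrightarrow> v 0 \<notin> P (Suc j)"
proof
  assume a: "j \<le> i" "v 0 \<in> P (Suc j)"
  hence "O0 = P (Suc j)" using O0prop(1) comp_eq unfolding P_Suc by metis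
  thus False using O0prop(2) Pcard[OF a(1)] by simp
qed


end


context S6 begin

lemma Spiece:
  assumes "j < i"
  shows "\<exists>S. v (2*j+2) \<in> S \<and> v (2*j+1) \<notin> S \<and> finite S \<and> card S \<le> 2 \<and> S \<subseteq> P (Suc j) \<and>
     (\<forall>a b. a \<in> S \<longrightarrow> {a,b} \<in> M \<longrightarrow> {a,b} \<noteq> ee j \<longrightarrow> b \<in> S) \<and> x (2*j+2) \<in> S"
proof -
  note h = PpropsS[OF assms]
  have d: "is_k_path M (P (Suc j)) 2 \<or> is_k_path M (P (Suc j)) 3 \<or> is_k_path M (P (Suc j)) 4"
    using h by (rule conjunct1)
  have m: "is_k_path M (P (Suc j)) 4 \<longrightarrow> middle_vertex M (P (Suc j)) (v (2*j+1))"
    using h[THEN conjunct2, THEN conjunct2, THEN conjunct1] .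
  obtain k where k: "is_k_path M (P (Suc j)) k" "k = 2 \<or> k = 3 \<or> k = 4"
    "k = 4 \<longrightarrow> middle_vertex M (P (Suc j)) (v (2*j+1))"
  proof -
    from d show thesis
    proof (elim disjE)
      assume "is_k_path M (P (Suc j)) 2" thus thesis using that[of 2] by simp
    next
      assume "is_k_path M (P (Suc j)) 3" thus thesis using that[of 3] by simp
    next
      assume "is_k_path M (P (Suc j)) 4" thus thesis using that[of 4] m by simp
    qed
  qed
  have ew: "{v (2*j+1), v (2*j+2)} \<in> M" using h ee_def by simp
  obtain S where S: "v (2*j+2) \<in> S" "v (2*j+1) \<notin> S" "finite S" "card S \<le> 2" "S \<subseteq> P (Suc j)"
    "\<forall>a b. a \<in> S \<longrightarrow> {a,b} \<in> M \<longrightarrow> {a,b} \<noteq> {v (2*j+1), v (2*j+2)} \<longrightarrow> b \<in> S"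
    using piece[OF k(1) k(2) P_Suc _ k(3) ew] h by blast
  have "comp (M - {ee j}) (v (2*j+2)) \<subseteq> S"
    by (rule comp_closed_sub) (use S(1,6) in \<open>auto simp: ee_def\<close>)
  hence "x (2*j+2) \<in> S" using h by blast
  thus ?thesis using S unfolding ee_def by blast
qed

lemma xP: "j < i \<Longrightarrow> x (2*j+2) \<in> P (Suc j) \<and> x (2*j+2) \<noteq> v (2*j+1)"
proof -
  assume "j < i"
  then obtain S where "v (2*j+1) \<notin> S" "S \<subseteq> P (Suc j)" "x (2*j+2) \<in> S"
    using Spiece by metis
  thus ?thesis by auto
qed

lemma xcases: "k \<le> i \<Longrightarrow> (k = 0 \<and> x (2*k) = v 0) \<or>
   (\<exists>j<i. k = Suc j \<and> x (2*k) \<in> P (Suc j) \<and> x (2*k) \<noteq> v (2*j+1))"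
proof (cases k)
  case 0 thus ?thesis using x0 by simp
next
  case (Suc j)
  assume "k \<le> i"
  hence "j < i" using Suc by simp
  moreover have "2*k = 2*j+2" using Suc by simp
  ultimately show ?thesis using xP[of j] Suc by auto
qed

lemma F1: "j \<le> i \<Longrightarrow> k \<le> i \<Longrightarrow> x (2*k) \<noteq> v (2*j+1)"
proof
  assume a: "j \<le> i" "k \<le> i" "x (2*k) = v (2*j+1)"
  from xcases[OF a(2)] show False
  proof
    assume "k = 0 \<and> x (2*k) = v 0"
    hence "v 0 = v (2*j+1)" using a by simp
    thus False using vinj[of 0 "2*j+1"] a(1) by simp
  next
    assume "\<exists>j'<i. k = Suc j' \<and> x (2*k) \<in> P (Suc j') \<and> x (2*k) \<noteq> v (2*j'+1)"
    then obtain j' where j': "j' < i" "x (2*k) \<in> P (Suc j')" "x (2*k) \<noteq> v (2*j'+1)" by blast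
    have "j' = j" using inP[of j' j] j' a vP1[of j] by simp
    thus False using j' a by simp
  qed
qed

lemma F2: "k \<le> i \<Longrightarrow> x (2*k) \<notin> P (Suc i)"
proof
  assume a: "k \<le> i" "x (2*k) \<in> P (Suc i)"
  from xcases[OF a(1)] show False
  proof
    assume "k = 0 \<and> x (2*k) = v 0"
    thus False using a O0notP[of i] x0 by auto
  next
    assume "\<exists>j'<i. k = Suc j' \<and> x (2*k) \<in> P (Suc j') \<and> x (2*k) \<noteq> v (2*j'+1)"
    then obtain j' where j': "j' < i" "x (2*k) \<in> P (Suc j')" by blast
    thus False using inP[of j' i] a by simp
  qed
qed

lemma F2': "k \<le> i \<Longrightarrow> x (2*k) \<noteq> v (2*i+2)"
  using F2 vP2[of i] by fastforce

lemma F3: "j \<le> i \<Longrightarrow> k \<le> i \<Longrightarrow> x (2*j) = x (2*k) \<Longrightarrow> j = k"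
proof -
  assume a: "j \<le> i" "k \<le> i" "x (2*j) = x (2*k)"
  show "j = k"
  proof (cases "j = 0")
    case True
    show ?thesis
    proof (rule ccontr)
      assume "j \<noteq> k"
      then obtain k' where "k' < i" "x (2*k) \<in> P (Suc k')" using xcases[OF a(2)] True by auto
      thus False using a True x0 O0notP[of k'] by simp
    qed
  next
    case False
    then obtain j' where j': "j' < i" "x (2*j) \<in> P (Suc j')" "j = Suc j'" using xcases[OF a(1)] by auto
    show ?thesis
    proof (cases "k = 0")
      case True thus ?thesis using j' a x0 O0notP[of j'] by simp
    next
      case False
      then obtain k' where k': "k' < i" "x (2*k) \<in> P (Suc k')" "k = Suc k'" using xcases[OF a(2)] by auto
      thus ?thesis using j' a inP[of j' k'] by simp
    qed
  qed
qed

lemma v1_in_ee: "j \<le> i \<Longrightarrow> k \<le> i \<Longrightarrow> v (2*j+1) \<in> ee k \<Longrightarrow> j = k"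
proof -
  assume a: "j \<le> i" "k \<le> i" "v (2*j+1) \<in> ee k"
  hence "v (2*j+1) = v (2*k+1) \<or> v (2*j+1) = v (2*k+2)" unfolding ee_def by simp
  thus "j = k"
  proof
    assume "v (2*j+1) = v (2*k+1)" thus "j = k" using vinj[of "2*j+1" "2*k+1"] a by simp
  next
    assume "v (2*j+1) = v (2*k+2)" hence "2*j+1 = 2*k+2" using vinj[of "2*j+1" "2*k+2"] a by simp
    thus "j = k" by presburger
  qed
qed

lemma v2_in_ee: "j \<le> i \<Longrightarrow> k \<le> i \<Longrightarrow> v (2*j+2) \<in> ee k \<Longrightarrow> j = k"
proof -
  assume a: "j \<le> i" "k \<le> i" "v (2*j+2) \<in> ee k"
  hence "v (2*j+2) = v (2*k+1) \<or> v (2*j+2) = v (2*k+2)" unfolding ee_def by simp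
  thus "j = k"
  proof
    assume "v (2*j+2) = v (2*k+2)" thus "j = k" using vinj[of "2*j+2" "2*k+2"] a by simp
  next
    assume "v (2*j+2) = v (2*k+1)" hence "2*j+2 = 2*k+1" using vinj[of "2*j+2" "2*k+1"] a by simp
    thus "j = k" by presburger
  qed
qed

lemma ee_inj: "inj_on ee {..i}"
  unfolding inj_on_def using v1_in_ee unfolding ee_def by (metis atMost_iff insertI1)

lemma aa_inj: "inj_on aa {..i}"
proof (rule inj_onI)
  fix j k assume a: "j \<in> {..i}" "k \<in> {..i}" "aa j = aa k"
  hence "v (2*j+1) \<in> aa k" unfolding aa_def by auto
  hence "v (2*j+1) = x (2*k) \<or> v (2*j+1) = v (2*k+1)" unfolding aa_def by auto
  thus "j = k" using F1[of j k] a vinj[of "2*j+1" "2*k+1"] by auto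
qed

lemma RR_img: "RR = ee ` {..i}" unfolding RR_def by auto
lemma AA_img: "AA = aa ` {..i}" unfolding AA_def by auto
lemma cardRR: "card RR = Suc i" unfolding RR_img using ee_inj by (simp add: card_image)
lemma cardAA: "card AA = Suc i" unfolding AA_img using aa_inj by (simp add: card_image)
lemma RR_M: "RR \<subseteq> M" using ee_M RR_img by auto
lemma finAA: "finite AA" using AA_img by simp

lemma cardM': "card M' = card M"
proof -
  have "card M' = card (M - RR) + card AA"
    unfolding M'_eq using AA_M finM finAA by (intro card_Un_disjoint) auto
  also have "card (M - RR) = card M - card RR" using RR_M finM finite_subset card_Diff_subset by metis
  finally show ?thesis using cardRR cardAA card_mono[OF finM RR_M] by simp
qed

end


context S6 begin

lemma O0closed: "a \<in> O0 \<Longrightarrow> {a,b} \<in> M \<Longrightarrow> b \<in> O0"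
  using O0prop(1) comp_step by metis

lemma M'R2: "edges2 (M - RR)" using M2 unfolding edges2_def by blast

lemma deg_x: "k \<le> i \<Longrightarrow> card {e \<in> M - RR. x (2*k) \<in> e} \<le> 1"
proof -
  assume k: "k \<le> i"
  from xcases[OF k] show ?thesis
  proof
    assume a: "k = 0 \<and> x (2*k) = v 0"
    show ?thesis
    proof (rule deg_small[OF M'R2, of _ O0])
      show "x (2*k) \<in> O0" using a v0O0 x0 by auto
      show "finite O0" "card O0 \<le> 2" using O0prop by auto
      show "\<And>b. {x (2 * k), b} \<in> M - RR \<Longrightarrow> b \<in> O0" using O0closed a v0O0 by auto
    qed
  next
    assume "\<exists>j<i. k = Suc j \<and> x (2*k) \<in> P (Suc j) \<and> x (2*k) \<noteq> v (2*j+1)"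
    then obtain j where j: "j < i" "k = Suc j" by blast
    have e: "2*k = 2*j+2" using j by simp
    obtain S where S: "finite S" "card S \<le> 2"
     "\<forall>a b. a \<in> S \<longrightarrow> {a,b} \<in> M \<longrightarrow> {a,b} \<noteq> ee j \<longrightarrow> b \<in> S" "x (2*j+2) \<in> S"
      using Spiece[OF j(1)] by metis
    have eR: "ee j \<in> RR" using j RR_img by simp
    show ?thesis unfolding e
    proof (rule deg_small[OF M'R2, of _ S])
      show "x (2*j+2) \<in> S" "finite S" "card S \<le> 2" using S by auto
      fix b assume b: "{x (2*j+2), b} \<in> M - RR"
      hence "{x (2*j+2), b} \<in> M" "{x (2*j+2), b} \<noteq> ee j" using eR by auto
      thus "b \<in> S" using S(3) S(4) by blast
    qed
  qed
qed

lemma card_ins_le: "finite Y \<Longrightarrow> card (insert a Y) \<le> Suc (card Y)"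
  by (simp add: card_insert_if)

lemma card_ins_diff:
  assumes "finite X" "b \<in> X" "card X \<le> 2" "Y \<subseteq> insert a (X - {b})"
  shows "card Y \<le> 2"
proof -
  have f: "finite (X - {b})" using assms(1) by simp
  have "card Y \<le> card (insert a (X - {b}))" using assms(4) f by (intro card_mono) auto
  also have "\<dots> \<le> Suc (card (X - {b}))" using card_ins_le[OF f] .
  also have "card (X - {b}) = card X - 1" using assms(1,2) by simp
  also have "card X \<ge> 1" using assms(1,2) card_0_eq[OF assms(1)] by (cases "card X") auto
  hence "Suc (card X - 1) \<le> 2" using assms(3) by simp
  finally show ?thesis using \<open>Suc (card X - 1) \<le> 2\<close> by simp
qed

lemma finM': "finite M'" using M'_eq finM finAA by simp

lemma twoM': "two_matching V E M'"
  unfolding two_matching_def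
proof (intro conjI ballI)
  show "M' \<subseteq> E" by (rule M'E)
  fix w assume wV: "w \<in> V"
  show "card {e \<in> M'. w \<in> e} \<le> 2"
  proof (cases "\<exists>k\<le>i. w = x (2*k)")
    case True
    then obtain k where k: "k \<le> i" "w = x (2*k)" by blast
    have "{e \<in> M'. w \<in> e} \<subseteq> insert (aa k) {e \<in> M - RR. w \<in> e}"
    proof
      fix e assume e: "e \<in> {e \<in> M'. w \<in> e}"
      show "e \<in> insert (aa k) {e \<in> M - RR. w \<in> e}"
      proof (cases "e \<in> AA")
        case True
        then obtain j where j: "j \<le> i" "e = aa j" using AA_img by auto
        hence "w = x (2*j) \<or> w = v (2*j+1)" using e unfolding aa_def by auto
        hence "j = k" using F3[OF j(1) k(1)] F1[OF j(1) k(1)] k(2) by metis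
        thus ?thesis using j by simp
      next
        case False thus ?thesis using e M'_eq by auto
      qed
    qed
    moreover have f: "finite {e \<in> M - RR. w \<in> e}" using finM by simp
    ultimately have "card {e \<in> M'. w \<in> e} \<le> card (insert (aa k) {e \<in> M - RR. w \<in> e})"
      by (intro card_mono) auto
    also have "\<dots> \<le> Suc (card {e \<in> M - RR. w \<in> e})" using card_ins_le[OF f] .
    finally have "card {e \<in> M'. w \<in> e} \<le> Suc (card {e \<in> M - RR. w \<in> e})" .
    thus ?thesis using deg_x[OF k(1)] k(2) by simp
  next
    case nx: False
    show ?thesis
    proof (cases "\<exists>j\<le>i. w = v (2*j+1)")
      case True
      then obtain j where j: "j \<le> i" "w = v (2*j+1)" by blast
      have "{e \<in> M'. w \<in> e} \<subseteq> insert (aa j) ({e \<in> M. w \<in> e} - {ee j})"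
      proof
        fix e assume e: "e \<in> {e \<in> M'. w \<in> e}"
        show "e \<in> insert (aa j) ({e \<in> M. w \<in> e} - {ee j})"
        proof (cases "e \<in> AA")
          case True
          then obtain j' where j': "j' \<le> i" "e = aa j'" using AA_img by auto
          hence "w = x (2*j') \<or> w = v (2*j'+1)" using e unfolding aa_def by auto
          hence "w = v (2*j'+1)" using nx j'(1) by blast
          hence "v (2*j'+1) = v (2*j+1)" using j(2) by simp
          hence "2*j'+1 = 2*j+1" by (rule vinj[rotated 2]) (use j(1) j'(1) in auto)
          hence "j' = j" by simp
          thus ?thesis using j' by simp
        next
          case False
          hence "e \<in> M - RR" using e M'_eq by auto
          moreover have "ee j \<in> RR" using j RR_img by simp
          ultimately show ?thesis using e by auto
        qed
      qed
      moreover have "ee j \<in> {e \<in> M. w \<in> e}" using ee_M[OF j(1)] j unfolding ee_def by simp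
      ultimately show ?thesis using card_ins_diff[of "{e \<in> M. w \<in> e}"] finM degM[OF wV] by simp
    next
      case False
      have "{e \<in> M'. w \<in> e} \<subseteq> {e \<in> M. w \<in> e}"
      proof
        fix e assume e: "e \<in> {e \<in> M'. w \<in> e}"
        have "e \<notin> AA"
        proof
          assume "e \<in> AA"
          then obtain j' where j': "j' \<le> i" "e = aa j'" using AA_img by auto
          hence "w = x (2*j') \<or> w = v (2*j'+1)" using e unfolding aa_def by auto
          thus False using nx False j'(1) by blast
        qed
        thus "e \<in> {e \<in> M. w \<in> e}" using e M'_eq by auto
      qed
      hence "card {e \<in> M'. w \<in> e} \<le> card {e \<in> M. w \<in> e}" using finM by (intro card_mono) auto
      thus ?thesis using degM[OF wV] by simp
    qed
  qed
qed

lemma maxM': "max_two_matching V E M'"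
  unfolding max_two_matching_def using twoM' MM cardM' unfolding max_two_matching_def by simp

end


context S6 begin

lemma nbrQ: "\<exists>u. {v (2*i+1), u} \<in> M \<and> u \<noteq> v (2*i+2)"
proof (rule ccontr)
  assume nq: "\<not> ?thesis"
  define M'' where "M'' = insert (ee i) M'"
  have eiR: "ee i \<in> RR" using RR_img by simp
  have nM': "ee i \<notin> M'" using M'_eq eiR AA_M eiM by auto
  have two: "two_matching V E M''"
    unfolding two_matching_def
  proof (intro conjI ballI)
    show "M'' \<subseteq> E" using M''_def M'E eiM ME by auto
    fix w assume wV: "w \<in> V"
    have d': "card {e \<in> M'. w \<in> e} \<le> 2" using twoM' wV unfolding two_matching_def by blast
    show "card {e \<in> M''. w \<in> e} \<le> 2"
    proof (cases "w = v (2*i+1)")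
      case True
      have "{e \<in> M''. w \<in> e} \<subseteq> {ee i, aa i}"
      proof
        fix e assume e: "e \<in> {e \<in> M''. w \<in> e}"
        show "e \<in> {ee i, aa i}"
        proof (cases "e = ee i")
          case False
          hence eM': "e \<in> M'" using e M''_def by auto
          show ?thesis
          proof (cases "e \<in> AA")
            case True
            then obtain j where j: "j \<le> i" "e = aa j" using AA_img by auto
            hence "w = x (2*j) \<or> w = v (2*j+1)" using e unfolding aa_def by auto
            hence "w = v (2*j+1)" using F1[OF le_refl j(1)] \<open>w = v (2*i+1)\<close> by metis
            hence "v (2*j+1) = v (2*i+1)" using \<open>w = v (2*i+1)\<close> by simp
            hence "2*j+1 = 2*i+1" by (rule vinj[rotated 2]) (use j(1) in auto)
            hence "j = i" by simp
            thus ?thesis using j by simp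
          next
            case False
            hence eM: "e \<in> M - RR" using eM' M'_eq by auto
            then obtain a b where ab: "a \<noteq> b" "e = {a,b}" using M2 unfolding edges2_def by blast
            have "w \<in> e" using e by simp
            then obtain u where u: "e = {w,u}" using ab by auto
            hence "u = v (2*i+2)" using nq eM True by auto
            hence "e = ee i" using u True unfolding ee_def by simp
            thus ?thesis by simp
          qed
        qed simp
      qed
      hence "card {e \<in> M''. w \<in> e} \<le> card {ee i, aa i}" by (intro card_mono) auto
      also have "\<dots> \<le> 2" by (simp add: card_insert_if)
      finally show ?thesis .
    next
      case nw1: False
      show ?thesis
      proof (cases "w = v (2*i+2)")
        case True
        have sub: "{e \<in> M''. w \<in> e} \<subseteq> insert (ee i) ({e \<in> M. w \<in> e} - {ee i})"
        proof
          fix e assume e: "e \<in> {e \<in> M''. w \<in> e}"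
          show "e \<in> insert (ee i) ({e \<in> M. w \<in> e} - {ee i})"
          proof (cases "e = ee i")
            case False
            hence eM': "e \<in> M'" using e M''_def by auto
            have "e \<notin> AA"
            proof
              assume "e \<in> AA"
              then obtain j where j: "j \<le> i" "e = aa j" using AA_img by auto
              hence "w = x (2*j) \<or> w = v (2*j+1)" using e unfolding aa_def by auto
              moreover have "x (2*j) \<noteq> v (2*i+2)" using F2'[OF j(1)] .
              moreover have "v (2*j+1) \<noteq> v (2*i+2)"
              proof
                assume "v (2*j+1) = v (2*i+2)"
                hence "2*j+1 = 2*i+2" by (rule vinj[rotated 2]) (use j(1) in auto)
                thus False by presburger
              qed
              ultimately show False using True by blast
            qed
            hence "e \<in> M" using eM' M'_eq by auto
            thus ?thesis using e False by auto
          qed simp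
        qed
        have mem: "ee i \<in> {e \<in> M. w \<in> e}" using eiM True unfolding ee_def by simp
        show ?thesis by (rule card_ins_diff[OF _ mem _ sub]) (use finM degM[OF wV] in auto)
      next
        case False
        have "{e \<in> M''. w \<in> e} = {e \<in> M'. w \<in> e}" using nw1 False unfolding M''_def ee_def by auto
        thus ?thesis using d' by simp
      qed
    qed
  qed
  have "card M'' = Suc (card M')" using M''_def nM' finM' by simp
  hence "card M'' > card M" using cardM' by simp
  thus False using two MM unfolding max_two_matching_def by fastforce
qed

lemma nbr: "j \<le> i \<Longrightarrow> \<exists>u. {v (2*j+1), u} \<in> M \<and> u \<noteq> v (2*j+2)"
proof (cases "j = i")
  case True thus ?thesis using nbrQ by simp
next
  case False
  assume "j \<le> i" hence ji: "j < i" using False by simp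
  obtain a b where ab: "a \<noteq> b" "{v (2*j+1), a} \<in> M" "{v (2*j+1), b} \<in> M"
    using internal_nbrs PpropsS[OF ji] by metis
  thus ?thesis by metis
qed

end


context S6 begin

lemma notR1: "j \<le> i \<Longrightarrow> u \<noteq> v (2*j+2) \<Longrightarrow> {v (2*j+1), u} \<notin> RR"
proof
  assume a: "j \<le> i" "u \<noteq> v (2*j+2)" "{v (2*j+1), u} \<in> RR"
  then obtain k where k: "k \<le> i" "{v (2*j+1), u} = ee k" using RR_img by auto
  hence "v (2*j+1) \<in> ee k" by auto
  hence "j = k" using v1_in_ee a(1) k(1) by blast
  hence "{v (2*j+1), u} = {v (2*j+1), v (2*j+2)}" using k ee_def by simp
  hence "u = v (2*j+2)" by (auto simp: doubleton_eq_iff)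
  thus False using a(2) by simp
qed

lemma notR2: "j \<le> i \<Longrightarrow> e \<subseteq> P (Suc j) \<Longrightarrow> e \<noteq> ee j \<Longrightarrow> e \<notin> RR"
proof
  assume a: "j \<le> i" "e \<subseteq> P (Suc j)" "e \<noteq> ee j" "e \<in> RR"
  then obtain k where k: "k \<le> i" "e = ee k" using RR_img by auto
  hence "v (2*k+1) \<in> P (Suc j)" using a(2) ee_def by auto
  hence "k = j" using inP[OF k(1) a(1)] vP1 by blast
  thus False using a k by simp
qed

lemma M'sub: "M - RR \<subseteq> M'" "AA \<subseteq> M'" using M'_eq by auto

lemma compM'fin: "t \<in> V \<Longrightarrow> finite (comp M' t)" using compfin M'E by blast

lemma three:
  assumes "t \<in> V" "a \<in> comp M' t" "b \<in> comp M' t" "c \<in> comp M' t" "a \<noteq> b" "b \<noteq> c" "a \<noteq> c"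
  shows "card (comp M' t) \<ge> 3"
proof -
  have "card {a,b,c} = 3" using assms(5-7) by simp
  moreover have "card {a,b,c} \<le> card (comp M' t)"
    using assms(2-4) compM'fin[OF assms(1)] by (intro card_mono) auto
  ultimately show ?thesis by simp
qed

lemma T1: "j \<le> i \<Longrightarrow> card (comp M' (x (2*j))) \<ge> 3 \<and> card (comp M' (v (2*j+1))) \<ge> 3"
proof -
  assume j: "j \<le> i"
  obtain u where u: "{v (2*j+1), u} \<in> M" "u \<noteq> v (2*j+2)" using nbr[OF j] by blast
  have aM': "{x (2*j), v (2*j+1)} \<in> M'" using M'sub(2) j AA_img aa_def by auto
  have uM': "{v (2*j+1), u} \<in> M'" using M'sub(1) u notR1[OF j u(2)] by auto
  have c1: "x (2*j) \<in> comp M' (x (2*j))" by (rule comp_refl)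
  have c2: "v (2*j+1) \<in> comp M' (x (2*j))" using comp_step[OF c1 aM'] .
  have c3: "u \<in> comp M' (x (2*j))" using comp_step[OF c2 uM'] .
  have d1: "x (2*j) \<noteq> v (2*j+1)" using edges2_ne[OF E2] aEM[OF j] unfolding aa_def by blast
  have d2: "v (2*j+1) \<noteq> u" using edges2_ne[OF M2 u(1)] .
  have d3: "x (2*j) \<noteq> u"
  proof
    assume "x (2*j) = u"
    hence "aa j \<in> M" using u(1) unfolding aa_def by (simp add: insert_commute)
    thus False using aEM[OF j] by simp
  qed
  have g: "card (comp M' (x (2*j))) \<ge> 3" using three[OF xV[OF j] c1 c2 c3 d1 d2 d3] .
  moreover have "comp M' (v (2*j+1)) = comp M' (x (2*j))" using comp_eq[OF c2] .
  ultimately show ?thesis by simp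
qed

lemma T2: "j < i \<Longrightarrow> card (comp M' (v (2*j+2))) \<ge> 3"
proof -
  assume j: "j < i"
  obtain S where S: "v (2*j+2) \<in> S" "S \<subseteq> P (Suc j)"
     "\<forall>a b. a \<in> S \<longrightarrow> {a,b} \<in> M \<longrightarrow> {a,b} \<noteq> ee j \<longrightarrow> b \<in> S"
    using Spiece[OF j] by metis
  have sub: "comp (M - {ee j}) (v (2*j+2)) \<subseteq> comp M' (v (2*j+2))"
  proof (rule comp_mono_sub[of S])
    fix a b assume a: "a \<in> S" "{a,b} \<in> M - {ee j}"
    hence bS: "b \<in> S" using S(3) by blast
    have "{a,b} \<subseteq> P (Suc j)" using a(1) bS S(2) by auto
    hence "{a,b} \<notin> RR" using notR2[of j] j a(2) by auto
    thus "b \<in> S \<and> {a,b} \<in> M'" using bS a(2) M'sub(1) by auto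
  qed (rule S(1))
  have "x (2*j+2) \<in> comp M' (v (2*j+2))" using sub PpropsS[OF j] by blast
  hence eq: "comp M' (x (2*j+2)) = comp M' (v (2*j+2))" by (rule comp_eq)
  have "Suc j \<le> i" using j by simp
  from T1[OF this] have "card (comp M' (x (2*Suc j))) \<ge> 3" by simp
  moreover have "2 * Suc j = 2*j+2" by simp
  ultimately show ?thesis using eq by simp
qed

lemma Qpath_or_cycle: "is_path M (P (Suc i)) \<or> is_cycle M (P (Suc i))"
  using Qshape unfolding is_path_def by blast

lemma T3: "card (comp M' (v (2*i+2))) \<ge> 3"
proof -
  have vV2i: "v (2*i+2) \<in> V" using vV2 by simp
  have Qcl: "\<And>a b. a \<in> P (Suc i) \<Longrightarrow> {a,b} \<in> M \<Longrightarrow> b \<in> P (Suc i)"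
    using comp_step unfolding P_Suc by metis
  have inM': "\<And>a b. a \<in> P (Suc i) \<Longrightarrow> {a,b} \<in> M \<Longrightarrow> {a,b} \<noteq> ee i \<Longrightarrow> {a,b} \<in> M'"
  proof -
    fix a b assume a: "a \<in> P (Suc i)" "{a,b} \<in> M" "{a,b} \<noteq> ee i"
    have "{a,b} \<subseteq> P (Suc i)" using a Qcl by auto
    hence "{a,b} \<notin> RR" using notR2[of i] a(3) by auto
    thus "{a,b} \<in> M'" using a(2) M'sub(1) by auto
  qed
  have v2Q: "v (2*i+2) \<in> P (Suc i)" using vP2 by simp
  from Qpath_or_cycle show ?thesis
  proof
    assume "is_path M (P (Suc i))"
    hence c: "card (comp (M - {ee i}) (v (2*i+2))) \<ge> 3" by (rule Q5)
    have "comp (M - {ee i}) (v (2*i+2)) \<subseteq> comp M' (v (2*i+2))"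
    proof (rule comp_mono_sub[of "P (Suc i)"])
      fix a b assume a: "a \<in> P (Suc i)" "{a,b} \<in> M - {ee i}"
      thus "b \<in> P (Suc i) \<and> {a,b} \<in> M'" using Qcl inM' by blast
    qed (rule v2Q)
    hence "card (comp (M - {ee i}) (v (2*i+2))) \<le> card (comp M' (v (2*i+2)))"
      using compM'fin[OF vV2i] by (rule card_mono[rotated])
    thus ?thesis using c by simp
  next
    assume cyc: "is_cycle M (P (Suc i))"
    obtain a b where ab: "a \<noteq> b" "{v (2*i+2), a} \<in> M" "{v (2*i+2), b} \<in> M"
      using cycle_nbrs[OF cyc v2Q] by blast
    obtain u where u: "{v (2*i+2), u} \<in> M" "u \<noteq> v (2*i+1)"
      using ab by metis
    have uQ: "u \<in> P (Suc i)" using Qcl[OF v2Q u(1)] .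
    obtain c d where cd: "c \<noteq> d" "{u, c} \<in> M" "{u, d} \<in> M"
      using cycle_nbrs[OF cyc uQ] by blast
    obtain u' where u': "{u, u'} \<in> M" "u' \<noteq> v (2*i+2)"
      using cd by metis
    have ne1: "{v (2*i+2), u} \<noteq> ee i" using u(2) unfolding ee_def by (auto simp: doubleton_eq_iff)
    have ne2: "u \<noteq> v (2*i+2)" using edges2_ne[OF M2 u(1)] by simp
    have ne3: "{u, u'} \<noteq> ee i" using ne2 u'(2) unfolding ee_def by (auto simp: doubleton_eq_iff)
    have e1: "{v (2*i+2), u} \<in> M'" using inM'[OF v2Q u(1) ne1] .
    have e2: "{u, u'} \<in> M'" using inM'[OF uQ u'(1) ne3] .
    have c1: "v (2*i+2) \<in> comp M' (v (2*i+2))" by (rule comp_refl)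
    have c2: "u \<in> comp M' (v (2*i+2))" using comp_step[OF c1 e1] .
    have c3: "u' \<in> comp M' (v (2*i+2))" using comp_step[OF c2 e2] .
    have d2: "u \<noteq> u'" using edges2_ne[OF M2 u'(1)] .
    show ?thesis using three[OF vV2i c1 c2 c3 ne2[symmetric] d2 u'(2)[symmetric]] .
  qed
qed

definition "TT = \<Union>(RR \<union> AA)"

lemma TT_cases: "t \<in> TT \<Longrightarrow> \<exists>j\<le>i. t = v (2*j+1) \<or> t = v (2*j+2) \<or> t = x (2*j)"
  unfolding TT_def RR_img AA_img ee_def aa_def by auto

lemma TT_card: "t \<in> TT \<Longrightarrow> card (comp M' t) \<ge> 3"
proof -
  assume "t \<in> TT"
  then obtain j where j: "j \<le> i" "t = v (2*j+1) \<or> t = v (2*j+2) \<or> t = x (2*j)"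
    using TT_cases by blast
  show ?thesis
  proof (cases "t = v (2*j+2)")
    case True
    thus ?thesis using T2 T3 j(1) by (cases "j = i") auto
  next
    case False thus ?thesis using T1[OF j(1)] j(2) by auto
  qed
qed

lemma TT_M: "t \<in> TT \<Longrightarrow> comp M t = O0 \<or> card (comp M t) \<ge> 3"
proof -
  assume "t \<in> TT"
  then obtain j where j: "j \<le> i" "t = v (2*j+1) \<or> t = v (2*j+2) \<or> t = x (2*j)"
    using TT_cases by blast
  have "comp M t = O0 \<or> (\<exists>j'\<le>i. t \<in> P (Suc j'))"
  proof (cases "t = x (2*j)")
    case True
    from xcases[OF j(1)] show ?thesis
    proof
      assume "j = 0 \<and> x (2*j) = v 0" thus ?thesis using True O0prop(1) by auto
    next
      assume "\<exists>j'<i. j = Suc j' \<and> x (2*j) \<in> P (Suc j') \<and> x (2*j) \<noteq> v (2*j'+1)"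
      thus ?thesis using True by auto
    qed
  next
    case False thus ?thesis using j vP1 vP2 by auto
  qed
  thus ?thesis
  proof
    assume "\<exists>j'\<le>i. t \<in> P (Suc j')"
    then obtain j' where j': "j' \<le> i" "t \<in> P (Suc j')" by blast
    hence "comp M t = P (Suc j')" using comp_eq unfolding P_Suc by metis
    thus ?thesis using Pcard[OF j'(1)] by simp
  qed simp
qed

lemma unch:
  assumes "\<And>e. e \<notin> X \<Longrightarrow> (e \<in> N1 \<longleftrightarrow> e \<in> N2)" "comp N1 w \<inter> \<Union>X = {}"
  shows "comp N2 w = comp N1 w"
proof
  have cl: "\<And>a b. a \<in> comp N1 w \<Longrightarrow> {a,b} \<notin> X"
    using assms(2) by blast
  show "comp N1 w \<subseteq> comp N2 w"
  proof (rule comp_mono_sub[of "comp N1 w"])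
    fix a b assume "a \<in> comp N1 w" "{a,b} \<in> N1"
    thus "b \<in> comp N1 w \<and> {a,b} \<in> N2" using comp_step cl assms(1) by metis
  qed (rule comp_refl)
  show "comp N2 w \<subseteq> comp N1 w"
  proof (rule comp_closed_sub)
    fix a b assume "a \<in> comp N1 w" "{a,b} \<in> N2"
    thus "b \<in> comp N1 w" using comp_step cl assms(1) by metis
  qed (rule comp_refl)
qed

lemma MM'out: "e \<notin> RR \<union> AA \<Longrightarrow> (e \<in> M \<longleftrightarrow> e \<in> M')"
  using M'_eq by auto

lemma obj_char: "N \<subseteq> E \<Longrightarrow> objects V N = {C \<in> comps V N. card C \<le> 2}"
proof -
  assume NE: "N \<subseteq> E"
  have e2: "edges2 N" using E2 NE unfolding edges2_def by blast
  show ?thesis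
  proof (intro set_eqI iffI)
    fix C assume "C \<in> objects V N"
    then obtain w where "w \<in> V" "C = comp N w" "is_k_path N C 0 \<or> is_k_path N C 1"
      unfolding objects_def comps_def by blast
    thus "C \<in> {C \<in> comps V N. card C \<le> 2}"
      using small_obj[OF e2] compfin[OF NE] unfolding comps_def by blast
  next
    fix C assume "C \<in> {C \<in> comps V N. card C \<le> 2}"
    then obtain w where "w \<in> V" "C = comp N w" "card C \<le> 2"
      unfolding comps_def by blast
    thus "C \<in> objects V N"
      using small_obj[OF e2] compfin[OF NE] unfolding comps_def objects_def by blast
  qed
qed

lemma v0TT: "v 0 \<in> TT"
proof -
  have "aa 0 \<in> AA" using AA_img by simp
  thus ?thesis unfolding TT_def aa_def using x0 by auto
qed

lemma objs: "objects V M' = objects V M - {O0}"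
proof (intro set_eqI iffI)
  fix C assume "C \<in> objects V M'"
  then obtain w where w: "w \<in> V" "C = comp M' w" "card C \<le> 2"
    using obj_char[OF M'E] unfolding comps_def by blast
  have dis: "C \<inter> TT = {}"
  proof (rule ccontr)
    assume "C \<inter> TT \<noteq> {}"
    then obtain t where t: "t \<in> C" "t \<in> TT" by blast
    hence "comp M' t = C" using w(2) comp_eq by metis
    thus False using TT_card[OF t(2)] w(3) by simp
  qed
  have "comp M w = comp M' w"
    by (rule unch[of "RR \<union> AA"]) (use MM'out dis w(2) TT_def in auto)
  hence "C \<in> comps V M" using w unfolding comps_def by auto
  moreover have "C \<noteq> O0" using dis v0TT v0O0 by auto
  ultimately show "C \<in> objects V M - {O0}" using obj_char[OF ME] w(3) by auto
next
  fix C assume "C \<in> objects V M - {O0}"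
  then obtain w where w: "w \<in> V" "C = comp M w" "card C \<le> 2" "C \<noteq> O0"
    using obj_char[OF ME] unfolding comps_def by blast
  have dis: "C \<inter> TT = {}"
  proof (rule ccontr)
    assume "C \<inter> TT \<noteq> {}"
    then obtain t where t: "t \<in> C" "t \<in> TT" by blast
    hence "comp M t = C" using w(2) comp_eq by metis
    thus False using TT_M[OF t(2)] w(3,4) by auto
  qed
  have "comp M' w = comp M w"
    by (rule unch[of "RR \<union> AA"]) (use MM'out dis w(2) TT_def in auto)
  hence "C \<in> comps V M'" using w unfolding comps_def by auto
  thus "C \<in> objects V M'" using obj_char[OF M'E] w(3) by auto
qed

lemma final: "max_two_matching V E M' \<and> card (objects V M') + 1 = card (objects V M)"
proof
  show "max_two_matching V E M'" by (rule maxM')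
  have fin: "finite (objects V M)"
  proof -
    have "objects V M \<subseteq> comps V M" unfolding objects_def by blast
    moreover have "finite (comps V M)" unfolding comps_def using finV by simp
    ultimately show ?thesis using finite_subset by blast
  qed
  have "card (objects V M') = card (objects V M) - 1" using objs fin O0obj by simp
  moreover have "card (objects V M) \<ge> 1" using fin O0obj card_0_eq by (cases "card (objects V M)") auto
  ultimately show "card (objects V M') + 1 = card (objects V M)" by simp
qed

end


theorem mainTheorem6:
  fixes V :: "'a set" and E M :: "'a set set" and O0 :: "'a set"
    and i :: nat and v x :: "nat \<Rightarrow> 'a"
  assumes "simple_graph V E"
    and "max_two_matching V E M"
    and "B_alternating_path V E M O0 i v x"
  defines "M' \<equiv> (M - {{v (2*j + 1), v (2*j + 2)} | j. j \<le> i})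
                 \<union> {{x (2*j), v (2*j + 1)} | j. j \<le> i}"
  shows "max_two_matching V E M' \<and> card (objects V M') + 1 = card (objects V M)"
proof -
  interpret S6 V E M O0 i v x M'
    using assms(1-3) by (unfold_locales) (simp_all add: M'_def)
  show ?thesis by (rule final)
qed

end
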